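(* Let $q\in\mathbb{R}$ and define on $(0,\pi/2)$ \[ A(x)=(\sin x-x\cos x)^2\cos x,\quad B(x)=x(\sin x-x\cos x)\sin^2x,\quad C(x)=-(2x^2\cos x-x\sin x-\cos x\sin^2x), \] and $g_1(x)=\dfrac{qB(x)-C(x)}{A(x)}$. Then (i) if $q\ge1$, $g_1$ is increasing on $(0,\pi/2)$ and $3q-\frac85<g_1(x)<\infty$ if $q>1$, while $3q-\frac85<g_1(x)<\frac{\pi^2}{4}-1$ if $q=1$; (ii) if $q\le\frac{34}{35}$, $g_1$ is decreasing on $(0,\pi/2)$ and $-\infty<g_1(x)<3q-\frac85$. *)

theory Defs
  imports Complex_Main
begin

definition fA :: "real \<Rightarrow> real" where
  "fA x = (sin x - x * cos x)^2 * cos x"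

definition fB :: "real \<Rightarrow> real" where
  "fB x = x * (sin x - x * cos x) * (sin x)^2"

definition fC :: "real \<Rightarrow> real" where
  "fC x = - (2 * x^2 * cos x - x * sin x - cos x * (sin x)^2)"

definition g1 :: "real \<Rightarrow> real \<Rightarrow> real" where
  "g1 q x = (q * fB x - fC x) / fA x"

end

theory Submission
  imports Defs "HOL-Analysis.Complex_Transcendental"
begin




fun sS :: "nat \<Rightarrow> real \<Rightarrow> real" where
  "sS 0 y = 0"
| "sS (Suc n) y = sS n y + (-1)^n * (y^(2*n+1) / fact (2*n+1))"

fun cS :: "nat \<Rightarrow> real \<Rightarrow> real" where
  "cS 0 y = 0"
| "cS (Suc n) y = cS n y + (-1)^n * (y^(2*n) / fact (2*n))"

lemma DERIV_pf: "DERIV (\<lambda>y::real. y^Suc k / fact (Suc k)) y :> y^k / fact k"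
proof -
  have "DERIV (\<lambda>y::real. y^Suc k) y :> real (Suc k) * y^k"
    using DERIV_pow[of "Suc k" y] by simp
  then have "DERIV (\<lambda>y::real. y^Suc k / fact (Suc k)) y :> real (Suc k) * y^k / fact (Suc k)"
    by (rule DERIV_cdivide)
  moreover have "real (Suc k) * y^k / fact (Suc k) = y^k / fact k"
    by (simp add: fact_Suc del: of_nat_Suc)
  ultimately show ?thesis by simp
qed

lemma DERIV_sS: "DERIV (sS n) y :> cS n y"
proof (induction n)
  case 0 then show ?case by simp
next
  case (Suc n)
  have e: "DERIV (\<lambda>y. y^(2*n+1) / fact (2*n+1)) y :> y^(2*n) / fact (2*n)"
    using DERIV_pf[of "2*n" y] by simp
  have "DERIV (\<lambda>y. sS n y + (-1)^n * (y^(2*n+1) / fact (2*n+1))) y :> cS n y + (-1)^n * (y^(2*n) / fact (2*n))"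
    by (intro DERIV_add DERIV_cmult Suc e)
  then show ?case by simp
qed

lemma DERIV_cS: "DERIV (cS (Suc n)) y :> - sS n y"
proof (induction n)
  case 0 then show ?case by simp
next
  case (Suc n)
  have e: "DERIV (\<lambda>y. y^(2*Suc n) / fact (2*Suc n)) y :> y^(2*n+1) / fact (2*n+1)"
    using DERIV_pf[of "2*n+1" y] by simp
  have "DERIV (\<lambda>y. cS (Suc n) y + (-1)^(Suc n) * (y^(2*Suc n) / fact (2*Suc n))) y
        :> - sS n y + (-1)^(Suc n) * (y^(2*n+1) / fact (2*n+1))"
    by (intro DERIV_add DERIV_cmult Suc e)
  then show ?case by (simp add: algebra_simps)
qed

lemma sS0: "sS m 0 = 0" by (induction m) auto
lemma cS0: "cS (Suc m) 0 = 1" by (induction m) auto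

lemma taylor_alt:
  assumes "0 \<le> y"
  shows "0 \<le> (-1)^Suc n * (cos y - cS (Suc n) y) \<and> 0 \<le> (-1)^Suc n * (sin y - sS (Suc n) y)"
  using assms
proof (induction n arbitrary: y)
  case 0
  have c: "0 \<le> (-1)^Suc 0 * (cos z - cS (Suc 0) z)" for z by simp
  have "(\<lambda>y. (-1)^Suc 0 * (sin y - sS (Suc 0) y)) 0 \<le> (\<lambda>y. (-1)^Suc 0 * (sin y - sS (Suc 0) y)) y"
  proof (rule DERIV_nonneg_imp_nondecreasing[OF 0(1)])
    fix x assume "0 \<le> x" "x \<le> y"
    have "DERIV (\<lambda>y. (-1)^Suc 0 * (sin y - sS (Suc 0) y)) x :> (-1)^Suc 0 * (cos x - cS (Suc 0) x)"
      by (intro DERIV_cmult DERIV_diff DERIV_sin DERIV_sS)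
    then show "\<exists>d. DERIV (\<lambda>y. (-1)^Suc 0 * (sin y - sS (Suc 0) y)) x :> d \<and> d \<ge> 0"
      using c by blast
  qed
  then show ?case using c by simp
next
  case (Suc n)
  have IHs: "0 \<le> (-1)^Suc n * (sin z - sS (Suc n) z)" if "0 \<le> z" for z using Suc.IH[OF that] by simp
  have c: "(\<lambda>y. (-1)^Suc (Suc n) * (cos y - cS (Suc (Suc n)) y)) 0 \<le> (\<lambda>y. (-1)^Suc (Suc n) * (cos y - cS (Suc (Suc n)) y)) z" if "0 \<le> z" for z
  proof (rule DERIV_nonneg_imp_nondecreasing[OF that])
    fix x assume "0 \<le> x" "x \<le> z"
    have "DERIV (\<lambda>y. (-1)^Suc (Suc n) * (cos y - cS (Suc (Suc n)) y)) x :> (-1)^Suc (Suc n) * (- sin x - - sS (Suc n) x)"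
      by (intro DERIV_cmult DERIV_diff DERIV_cos DERIV_cS)
    moreover have "(-1)^Suc (Suc n) * (- sin x - - sS (Suc n) x) = (-1)^Suc n * (sin x - sS (Suc n) x)"
      by (simp only: power_Suc) (simp add: algebra_simps)
    ultimately show "\<exists>d. DERIV (\<lambda>y. (-1)^Suc (Suc n) * (cos y - cS (Suc (Suc n)) y)) x :> d \<and> d \<ge> 0"
      using IHs[OF \<open>0 \<le> x\<close>] by auto
  qed
  have cc: "0 \<le> (-1)^Suc (Suc n) * (cos z - cS (Suc (Suc n)) z)" if "0 \<le> z" for z
    using c[OF that] cS0[of "Suc n"] by simp
  have "(\<lambda>y. (-1)^Suc (Suc n) * (sin y - sS (Suc (Suc n)) y)) 0 \<le> (\<lambda>y. (-1)^Suc (Suc n) * (sin y - sS (Suc (Suc n)) y)) y"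
  proof (rule DERIV_nonneg_imp_nondecreasing[OF Suc.prems])
    fix x assume "0 \<le> x" "x \<le> y"
    have "DERIV (\<lambda>y. (-1)^Suc (Suc n) * (sin y - sS (Suc (Suc n)) y)) x :> (-1)^Suc (Suc n) * (cos x - cS (Suc (Suc n)) x)"
      by (intro DERIV_cmult DERIV_diff DERIV_sin DERIV_sS)
    then show "\<exists>d. DERIV (\<lambda>y. (-1)^Suc (Suc n) * (sin y - sS (Suc (Suc n)) y)) x :> d \<and> d \<ge> 0"
      using cc[OF \<open>0 \<le> x\<close>] by blast
  qed
  then show ?case using cc[OF Suc.prems] sS0 by simp
qed


lemma multi_angle:
  fixes x :: real
  shows
  "sin (2 * x) = 2 * sin x * cos x"
  "cos (2 * x) = cos x^2 - sin x^2"
  "sin (3 * x) = 3 * sin x * cos x^2 - sin x^3"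
  "cos (3 * x) = cos x^3 - 3 * sin x^2 * cos x"
  "sin (4 * x) = 4 * sin x * cos x^3 - 4 * sin x^3 * cos x"
  "cos (4 * x) = cos x^4 - 6 * sin x^2 * cos x^2 + sin x^4"
  "sin (5 * x) = 5 * cos x^4 * sin x - 10 * cos x^2 * sin x^3 + sin x^5"
  "cos (5 * x) = cos x^5 - 10 * cos x^3 * sin x^2 + 5 * cos x * sin x^4"
proof -
  have s2: "sin (2 * x) = 2 * sin x * cos x" by (rule sin_double)
  have c2: "cos (2 * x) = cos x^2 - sin x^2" by (rule cos_double)
  have e3: "3 * x = 2 * x + x" and e4: "4 * x = 3 * x + x" and e5: "5 * x = 4 * x + x" by simp_all
  have s3: "sin (3 * x) = 3 * sin x * cos x^2 - sin x^3"
    unfolding e3 sin_add s2 c2 by algebra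
  have c3: "cos (3 * x) = cos x^3 - 3 * sin x^2 * cos x"
    unfolding e3 cos_add s2 c2 by algebra
  have s4: "sin (4 * x) = 4 * sin x * cos x^3 - 4 * sin x^3 * cos x"
    unfolding e4 sin_add s3 c3 by algebra
  have c4: "cos (4 * x) = cos x^4 - 6 * sin x^2 * cos x^2 + sin x^4"
    unfolding e4 cos_add s3 c3 by algebra
  have s5: "sin (5 * x) = 5 * cos x^4 * sin x - 10 * cos x^2 * sin x^3 + sin x^5"
    unfolding e5 sin_add s4 c4 by algebra
  have c5: "cos (5 * x) = cos x^5 - 10 * cos x^3 * sin x^2 + 5 * cos x * sin x^4"
    unfolding e5 cos_add s4 c4 by algebra
  show "sin (2 * x) = 2 * sin x * cos x" "cos (2 * x) = cos x^2 - sin x^2"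
    "sin (3 * x) = 3 * sin x * cos x^2 - sin x^3" "cos (3 * x) = cos x^3 - 3 * sin x^2 * cos x"
    "sin (4 * x) = 4 * sin x * cos x^3 - 4 * sin x^3 * cos x" "cos (4 * x) = cos x^4 - 6 * sin x^2 * cos x^2 + sin x^4"
    "sin (5 * x) = 5 * cos x^4 * sin x - 10 * cos x^2 * sin x^3 + sin x^5"
    "cos (5 * x) = cos x^5 - 10 * cos x^3 * sin x^2 + 5 * cos x * sin x^4"
    using s2 c2 s3 c3 s4 c4 s5 c5 by auto
qed

lemma xle_sq: assumes "0 < x" "x \<le> pi/2" shows "x^2 \<le> (987/400::real)"
proof -
  have "pi/2 \<le> 3.1415926535899/2" using pi_approx(2) by simp
  then have "x \<le> 3.1415926535899/2" using assms(2) by linarith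
  then have "x^2 \<le> (3.1415926535899/2)^2" using assms(1) by (intro power_mono) auto
  moreover have "(3.1415926535899/2)^2 \<le> (987/400::real)" by (simp add: power2_eq_square)
  ultimately show ?thesis by linarith
qed

lemma cos_lo4: "0 \<le> (y::real) \<Longrightarrow> ((1) * y^0 + (-1/2) * y^2 + (1/24) * y^4 + (-1/720) * y^6) \<le> cos y"
  using taylor_alt[of y 3] by (simp add: eval_nat_numeral fact_Suc)

lemma cos_hi5: "0 \<le> (y::real) \<Longrightarrow> cos y \<le> ((1) * y^0 + (-1/2) * y^2 + (1/24) * y^4 + (-1/720) * y^6 + (1/40320) * y^8)"
  using taylor_alt[of y 4] by (simp add: eval_nat_numeral fact_Suc)

lemma cos_lo6: "0 \<le> (y::real) \<Longrightarrow> ((1) * y^0 + (-1/2) * y^2 + (1/24) * y^4 + (-1/720) * y^6 + (1/40320) * y^8 + (-1/3628800) * y^10) \<le> cos y"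
  using taylor_alt[of y 5] by (simp add: eval_nat_numeral fact_Suc)

lemma cos_hi7: "0 \<le> (y::real) \<Longrightarrow> cos y \<le> ((1) * y^0 + (-1/2) * y^2 + (1/24) * y^4 + (-1/720) * y^6 + (1/40320) * y^8 + (-1/3628800) * y^10 + (1/479001600) * y^12)"
  using taylor_alt[of y 6] by (simp add: eval_nat_numeral fact_Suc)

lemma cos_lo8: "0 \<le> (y::real) \<Longrightarrow> ((1) * y^0 + (-1/2) * y^2 + (1/24) * y^4 + (-1/720) * y^6 + (1/40320) * y^8 + (-1/3628800) * y^10 + (1/479001600) * y^12 + (-1/87178291200) * y^14) \<le> cos y"
  using taylor_alt[of y 7] by (simp add: eval_nat_numeral fact_Suc)

lemma cos_hi9: "0 \<le> (y::real) \<Longrightarrow> cos y \<le> ((1) * y^0 + (-1/2) * y^2 + (1/24) * y^4 + (-1/720) * y^6 + (1/40320) * y^8 + (-1/3628800) * y^10 + (1/479001600) * y^12 + (-1/87178291200) * y^14 + (1/20922789888000) * y^16)"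
  using taylor_alt[of y 8] by (simp add: eval_nat_numeral fact_Suc)

lemma cos_lo10: "0 \<le> (y::real) \<Longrightarrow> ((1) * y^0 + (-1/2) * y^2 + (1/24) * y^4 + (-1/720) * y^6 + (1/40320) * y^8 + (-1/3628800) * y^10 + (1/479001600) * y^12 + (-1/87178291200) * y^14 + (1/20922789888000) * y^16 + (-1/6402373705728000) * y^18) \<le> cos y"
  using taylor_alt[of y 9] by (simp add: eval_nat_numeral fact_Suc)

lemma cos_hi11: "0 \<le> (y::real) \<Longrightarrow> cos y \<le> ((1) * y^0 + (-1/2) * y^2 + (1/24) * y^4 + (-1/720) * y^6 + (1/40320) * y^8 + (-1/3628800) * y^10 + (1/479001600) * y^12 + (-1/87178291200) * y^14 + (1/20922789888000) * y^16 + (-1/6402373705728000) * y^18 + (1/2432902008176640000) * y^20)"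
  using taylor_alt[of y 10] by (simp add: eval_nat_numeral fact_Suc)

lemma sin_lo4: "0 \<le> (y::real) \<Longrightarrow> ((1) * y^1 + (-1/6) * y^3 + (1/120) * y^5 + (-1/5040) * y^7) \<le> sin y"
  using taylor_alt[of y 3] by (simp add: eval_nat_numeral fact_Suc)

lemma sin_hi5: "0 \<le> (y::real) \<Longrightarrow> sin y \<le> ((1) * y^1 + (-1/6) * y^3 + (1/120) * y^5 + (-1/5040) * y^7 + (1/362880) * y^9)"
  using taylor_alt[of y 4] by (simp add: eval_nat_numeral fact_Suc)

lemma sin_lo6: "0 \<le> (y::real) \<Longrightarrow> ((1) * y^1 + (-1/6) * y^3 + (1/120) * y^5 + (-1/5040) * y^7 + (1/362880) * y^9 + (-1/39916800) * y^11) \<le> sin y"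
  using taylor_alt[of y 5] by (simp add: eval_nat_numeral fact_Suc)

lemma sin_lo8: "0 \<le> (y::real) \<Longrightarrow> ((1) * y^1 + (-1/6) * y^3 + (1/120) * y^5 + (-1/5040) * y^7 + (1/362880) * y^9 + (-1/39916800) * y^11 + (1/6227020800) * y^13 + (-1/1307674368000) * y^15) \<le> sin y"
  using taylor_alt[of y 7] by (simp add: eval_nat_numeral fact_Suc)

lemma sin_hi9: "0 \<le> (y::real) \<Longrightarrow> sin y \<le> ((1) * y^1 + (-1/6) * y^3 + (1/120) * y^5 + (-1/5040) * y^7 + (1/362880) * y^9 + (-1/39916800) * y^11 + (1/6227020800) * y^13 + (-1/1307674368000) * y^15 + (1/355687428096000) * y^17)"
  using taylor_alt[of y 8] by (simp add: eval_nat_numeral fact_Suc)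

lemma sin_lo10: "0 \<le> (y::real) \<Longrightarrow> ((1) * y^1 + (-1/6) * y^3 + (1/120) * y^5 + (-1/5040) * y^7 + (1/362880) * y^9 + (-1/39916800) * y^11 + (1/6227020800) * y^13 + (-1/1307674368000) * y^15 + (1/355687428096000) * y^17 + (-1/121645100408832000) * y^19) \<le> sin y"
  using taylor_alt[of y 9] by (simp add: eval_nat_numeral fact_Suc)

lemma sin_hi11: "0 \<le> (y::real) \<Longrightarrow> sin y \<le> ((1) * y^1 + (-1/6) * y^3 + (1/120) * y^5 + (-1/5040) * y^7 + (1/362880) * y^9 + (-1/39916800) * y^11 + (1/6227020800) * y^13 + (-1/1307674368000) * y^15 + (1/355687428096000) * y^17 + (-1/121645100408832000) * y^19 + (1/51090942171709440000) * y^21)"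
  using taylor_alt[of y 10] by (simp add: eval_nat_numeral fact_Suc)

lemma E_U:
  assumes xpos: "0 < x" and xle: "x \<le> pi/2"
  shows "0 < (1) * x^0 * sin x^3 * cos x^1 + (1) * x^1 * sin x^2 * cos x^2 + (1) * x^1 * sin x^4 * cos x^0 + (-2) * x^2 * sin x^1 * cos x^3 + (-2) * x^2 * sin x^3 * cos x^1"
proof -
  have y: "x^2 \<le> 987/400" using xle_sq[OF xpos xle] .
  have id: "(1) * x^0 * sin x^3 * cos x^1 + (1) * x^1 * sin x^2 * cos x^2 + (1) * x^1 * sin x^4 * cos x^0 + (-2) * x^2 * sin x^1 * cos x^3 + (-2) * x^2 * sin x^3 * cos x^1 = (1/4) * x^0 * sin (2*x) + (-1/8) * x^0 * sin (4*x) + (1/2) * x^1 + (-1/2) * x^1 * cos (2*x) + (-1) * x^2 * sin (2*x)"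
    using sin_cos_squared_add[of x] unfolding multi_angle by algebra
  have b0: "(1/4) * x^0 * sin (2*x) \<ge> (1/4) * x^0 * ((1) * (2*x)^1 + (-1/6) * (2*x)^3 + (1/120) * (2*x)^5 + (-1/5040) * (2*x)^7)"
    by (rule mult_left_mono[OF sin_lo4[of "2*x"]]) (use xpos in simp_all)
  have b1: "(-1/8) * x^0 * sin (4*x) \<ge> (-1/8) * x^0 * ((1) * (4*x)^1 + (-1/6) * (4*x)^3 + (1/120) * (4*x)^5 + (-1/5040) * (4*x)^7 + (1/362880) * (4*x)^9)"
    by (rule mult_left_mono_neg[OF sin_hi5[of "4*x"]]) (use xpos in simp_all)
  have b3: "(-1/2) * x^1 * cos (2*x) \<ge> (-1/2) * x^1 * ((1) * (2*x)^0 + (-1/2) * (2*x)^2 + (1/24) * (2*x)^4 + (-1/720) * (2*x)^6 + (1/40320) * (2*x)^8)"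
    by (rule mult_left_mono_neg[OF cos_hi5[of "2*x"]]) (use xpos in simp_all)
  have b4: "(-1) * x^2 * sin (2*x) \<ge> (-1) * x^2 * ((1) * (2*x)^1 + (-1/6) * (2*x)^3 + (1/120) * (2*x)^5 + (-1/5040) * (2*x)^7 + (1/362880) * (2*x)^9)"
    by (rule mult_left_mono_neg[OF sin_hi5[of "2*x"]]) (use xpos in simp_all)
  have low: "(1/4) * x^0 * sin (2*x) + (-1/8) * x^0 * sin (4*x) + (1/2) * x^1 + (-1/2) * x^1 * cos (2*x) + (-1) * x^2 * sin (2*x) \<ge> (1/4) * x^0 * ((1) * (2*x)^1 + (-1/6) * (2*x)^3 + (1/120) * (2*x)^5 + (-1/5040) * (2*x)^7) + (-1/8) * x^0 * ((1) * (4*x)^1 + (-1/6) * (4*x)^3 + (1/120) * (4*x)^5 + (-1/5040) * (4*x)^7 + (1/362880) * (4*x)^9) + (1/2) * x^1 + (-1/2) * x^1 * ((1) * (2*x)^0 + (-1/2) * (2*x)^2 + (1/24) * (2*x)^4 + (-1/720) * (2*x)^6 + (1/40320) * (2*x)^8) + (-1) * x^2 * ((1) * (2*x)^1 + (-1/6) * (2*x)^3 + (1/120) * (2*x)^5 + (-1/5040) * (2*x)^7 + (1/362880) * (2*x)^9)"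
    by (intro add_mono b0 b1 b3 b4 order_refl)
  have eq: "(1/4) * x^0 * ((1) * (2*x)^1 + (-1/6) * (2*x)^3 + (1/120) * (2*x)^5 + (-1/5040) * (2*x)^7) + (-1/8) * x^0 * ((1) * (4*x)^1 + (-1/6) * (4*x)^3 + (1/120) * (4*x)^5 + (-1/5040) * (4*x)^7 + (1/362880) * (4*x)^9) + (1/2) * x^1 + (-1/2) * x^1 * ((1) * (2*x)^0 + (-1/2) * (2*x)^2 + (1/24) * (2*x)^4 + (-1/720) * (2*x)^6 + (1/40320) * (2*x)^8) + (-1) * x^2 * ((1) * (2*x)^1 + (-1/6) * (2*x)^3 + (1/120) * (2*x)^5 + (-1/5040) * (2*x)^7 + (1/362880) * (2*x)^9) = x^7 * ((256000/8767521) * (987/400 - x^2)^2 + (115760/3757509) * (x^2)^1 * (987/400 - x^2)^1 + (26044/131512815) * (x^2)^2)"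
    by algebra
  have pos: "0 < x^7 * ((256000/8767521) * (987/400 - x^2)^2 + (115760/3757509) * (x^2)^1 * (987/400 - x^2)^1 + (26044/131512815) * (x^2)^2)"
    using xpos y by (intro mult_pos_pos add_nonneg_pos add_nonneg_nonneg mult_nonneg_nonneg zero_le_power zero_less_power) simp_all
  show ?thesis using id low eq pos by linarith
qed

lemma E_W:
  assumes xpos: "0 < x" and xle: "x \<le> pi/2"
  shows "0 < (-3) * x^0 * sin x^2 * cos x^1 + (6) * x^1 * sin x^1 * cos x^2 + (5) * x^1 * sin x^3 * cos x^0 + (-3) * x^2 * sin x^0 * cos x^3 + (-3) * x^2 * sin x^2 * cos x^1 + (-2) * x^3 * sin x^1 * cos x^2 + (-2) * x^3 * sin x^3 * cos x^0"
proof -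
  have y: "x^2 \<le> 987/400" using xle_sq[OF xpos xle] .
  have id: "(-3) * x^0 * sin x^2 * cos x^1 + (6) * x^1 * sin x^1 * cos x^2 + (5) * x^1 * sin x^3 * cos x^0 + (-3) * x^2 * sin x^0 * cos x^3 + (-3) * x^2 * sin x^2 * cos x^1 + (-2) * x^3 * sin x^1 * cos x^2 + (-2) * x^3 * sin x^3 * cos x^0 = (-3/4) * x^0 * cos x + (3/4) * x^0 * cos (3*x) + (21/4) * x^1 * sin x + (1/4) * x^1 * sin (3*x) + (-3) * x^2 * cos x + (-2) * x^3 * sin x"
    using sin_cos_squared_add[of x] unfolding multi_angle by algebra
  have b0: "(-3/4) * x^0 * cos x \<ge> (-3/4) * x^0 * ((1) * x^0 + (-1/2) * x^2 + (1/24) * x^4 + (-1/720) * x^6 + (1/40320) * x^8 + (-1/3628800) * x^10 + (1/479001600) * x^12 + (-1/87178291200) * x^14 + (1/20922789888000) * x^16)"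
    by (rule mult_left_mono_neg[OF cos_hi9[of "x"]]) (use xpos in simp_all)
  have b1: "(3/4) * x^0 * cos (3*x) \<ge> (3/4) * x^0 * ((1) * (3*x)^0 + (-1/2) * (3*x)^2 + (1/24) * (3*x)^4 + (-1/720) * (3*x)^6 + (1/40320) * (3*x)^8 + (-1/3628800) * (3*x)^10 + (1/479001600) * (3*x)^12 + (-1/87178291200) * (3*x)^14)"
    by (rule mult_left_mono[OF cos_lo8[of "3*x"]]) (use xpos in simp_all)
  have b2: "(21/4) * x^1 * sin x \<ge> (21/4) * x^1 * ((1) * x^1 + (-1/6) * x^3 + (1/120) * x^5 + (-1/5040) * x^7 + (1/362880) * x^9 + (-1/39916800) * x^11 + (1/6227020800) * x^13 + (-1/1307674368000) * x^15)"
    by (rule mult_left_mono[OF sin_lo8[of "x"]]) (use xpos in simp_all)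
  have b3: "(1/4) * x^1 * sin (3*x) \<ge> (1/4) * x^1 * ((1) * (3*x)^1 + (-1/6) * (3*x)^3 + (1/120) * (3*x)^5 + (-1/5040) * (3*x)^7 + (1/362880) * (3*x)^9 + (-1/39916800) * (3*x)^11 + (1/6227020800) * (3*x)^13 + (-1/1307674368000) * (3*x)^15)"
    by (rule mult_left_mono[OF sin_lo8[of "3*x"]]) (use xpos in simp_all)
  have b4: "(-3) * x^2 * cos x \<ge> (-3) * x^2 * ((1) * x^0 + (-1/2) * x^2 + (1/24) * x^4 + (-1/720) * x^6 + (1/40320) * x^8 + (-1/3628800) * x^10 + (1/479001600) * x^12 + (-1/87178291200) * x^14 + (1/20922789888000) * x^16)"
    by (rule mult_left_mono_neg[OF cos_hi9[of "x"]]) (use xpos in simp_all)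
  have b5: "(-2) * x^3 * sin x \<ge> (-2) * x^3 * ((1) * x^1 + (-1/6) * x^3 + (1/120) * x^5 + (-1/5040) * x^7 + (1/362880) * x^9 + (-1/39916800) * x^11 + (1/6227020800) * x^13 + (-1/1307674368000) * x^15 + (1/355687428096000) * x^17)"
    by (rule mult_left_mono_neg[OF sin_hi9[of "x"]]) (use xpos in simp_all)
  have low: "(-3/4) * x^0 * cos x + (3/4) * x^0 * cos (3*x) + (21/4) * x^1 * sin x + (1/4) * x^1 * sin (3*x) + (-3) * x^2 * cos x + (-2) * x^3 * sin x \<ge> (-3/4) * x^0 * ((1) * x^0 + (-1/2) * x^2 + (1/24) * x^4 + (-1/720) * x^6 + (1/40320) * x^8 + (-1/3628800) * x^10 + (1/479001600) * x^12 + (-1/87178291200) * x^14 + (1/20922789888000) * x^16) + (3/4) * x^0 * ((1) * (3*x)^0 + (-1/2) * (3*x)^2 + (1/24) * (3*x)^4 + (-1/720) * (3*x)^6 + (1/40320) * (3*x)^8 + (-1/3628800) * (3*x)^10 + (1/479001600) * (3*x)^12 + (-1/87178291200) * (3*x)^14) + (21/4) * x^1 * ((1) * x^1 + (-1/6) * x^3 + (1/120) * x^5 + (-1/5040) * x^7 + (1/362880) * x^9 + (-1/39916800) * x^11 + (1/6227020800) * x^13 + (-1/1307674368000) * x^15) + (1/4) * x^1 * ((1) * (3*x)^1 + (-1/6) * (3*x)^3 + (1/120) * (3*x)^5 + (-1/5040) * (3*x)^7 + (1/362880) * (3*x)^9 + (-1/39916800) * (3*x)^11 + (1/6227020800) *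 (3*x)^13 + (-1/1307674368000) * (3*x)^15) + (-3) * x^2 * ((1) * x^0 + (-1/2) * x^2 + (1/24) * x^4 + (-1/720) * x^6 + (1/40320) * x^8 + (-1/3628800) * x^10 + (1/479001600) * x^12 + (-1/87178291200) * x^14 + (1/20922789888000) * x^16) + (-2) * x^3 * ((1) * x^1 + (-1/6) * x^3 + (1/120) * x^5 + (-1/5040) * x^7 + (1/362880) * x^9 + (-1/39916800) * x^11 + (1/6227020800) * x^13 + (-1/1307674368000) * x^15 + (1/355687428096000) * x^17)"
    by (intro add_mono b0 b1 b2 b3 b4 b5 order_refl)
  have eq: "(-3/4) * x^0 * ((1) * x^0 + (-1/2) * x^2 + (1/24) * x^4 + (-1/720) * x^6 + (1/40320) * x^8 + (-1/3628800) * x^10 + (1/479001600) * x^12 + (-1/87178291200) * x^14 + (1/20922789888000) * x^16) + (3/4) * x^0 * ((1) * (3*x)^0 + (-1/2) * (3*x)^2 + (1/24) * (3*x)^4 + (-1/720) * (3*x)^6 + (1/40320) * (3*x)^8 + (-1/3628800) * (3*x)^10 + (1/479001600) * (3*x)^12 + (-1/87178291200) * (3*x)^14) + (21/4) * x^1 * ((1) * x^1 + (-1/6) * x^3 + (1/120) * x^5 + (-1/5040) * x^7 + (1/362880) * x^9 + (-1/39916800) * x^11 + (1/6227020800) * x^13 + (-1/1307674368000) * x^15) + (1/4) * x^1 * ((1) * (3*x)^1 + (-1/6) * (3*x)^3 + (1/120) * (3*x)^5 + (-1/5040) * (3*x)^7 + (1/362880) * (3*x)^9 + (-1/39916800) *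 (3*x)^11 + (1/6227020800) * (3*x)^13 + (-1/1307674368000) * (3*x)^15) + (-3) * x^2 * ((1) * x^0 + (-1/2) * x^2 + (1/24) * x^4 + (-1/720) * x^6 + (1/40320) * x^8 + (-1/3628800) * x^10 + (1/479001600) * x^12 + (-1/87178291200) * x^14 + (1/20922789888000) * x^16) + (-2) * x^3 * ((1) * x^1 + (-1/6) * x^3 + (1/120) * x^5 + (-1/5040) * x^7 + (1/362880) * x^9 + (-1/39916800) * x^11 + (1/6227020800) * x^13 + (-1/1307674368000) * x^15 + (1/355687428096000) * x^17) = x^10 * ((3276800000000/177030284589970623) * (987/400 - x^2)^5 + (15036416000000/177030284589970623) * (x^2)^1 * (987/400 - x^2)^4 + (101374400000000/649111043496558951) * (x^2)^2 * (987/400 - x^2)^3 + (1860596116801613615/12961449316539289133568) * (x^2)^3 * (987/400 - x^2)^2 + (17050283494159105321/259228986330785782671360) * (x^2)^4 * (987/400 - x^2)^1 + (1172395797163035112793/97930950391630184564736000) * (x^2)^5)"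
    by algebra
  have pos: "0 < x^10 * ((3276800000000/177030284589970623) * (987/400 - x^2)^5 + (15036416000000/177030284589970623) * (x^2)^1 * (987/400 - x^2)^4 + (101374400000000/649111043496558951) * (x^2)^2 * (987/400 - x^2)^3 + (1860596116801613615/12961449316539289133568) * (x^2)^3 * (987/400 - x^2)^2 + (17050283494159105321/259228986330785782671360) * (x^2)^4 * (987/400 - x^2)^1 + (1172395797163035112793/97930950391630184564736000) * (x^2)^5)"
    using xpos y by (intro mult_pos_pos add_nonneg_pos add_nonneg_nonneg mult_nonneg_nonneg zero_le_power zero_less_power) simp_all
  show ?thesis using id low eq pos by linarith
qed

lemma E_G:
  assumes xpos: "0 < x" and xle: "x \<le> pi/2"
  shows "0 < (3) * x^0 * sin x^2 * cos x^3 + (1/35) * x^0 * sin x^4 * cos x^1 + (-6) * x^1 * sin x^1 * cos x^4 + (-5) * x^1 * sin x^3 * cos x^2 + (1/35) * x^1 * sin x^5 * cos x^0 + (3) * x^2 * sin x^0 * cos x^5 + (102/35) * x^2 * sin x^2 * cos x^3 + (-3/35) * x^2 * sin x^4 * cos x^1 + (72/35) * x^3 * sin x^1 * cos x^4 + (72/35) * x^3 * sin x^3 * cos x^2"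
proof -
  have y: "x^2 \<le> 987/400" using xle_sq[OF xpos xle] .
  have id: "(3) * x^0 * sin x^2 * cos x^3 + (1/35) * x^0 * sin x^4 * cos x^1 + (-6) * x^1 * sin x^1 * cos x^4 + (-5) * x^1 * sin x^3 * cos x^2 + (1/35) * x^1 * sin x^5 * cos x^0 + (3) * x^2 * sin x^0 * cos x^5 + (102/35) * x^2 * sin x^2 * cos x^3 + (-3/35) * x^2 * sin x^4 * cos x^1 + (72/35) * x^3 * sin x^1 * cos x^4 + (72/35) * x^3 * sin x^3 * cos x^2 = (53/140) * x^0 * cos x + (-27/140) * x^0 * cos (3*x) + (-13/70) * x^0 * cos (5*x) + (-19/14) * x^1 * sin x + (-81/56) * x^1 * sin (3*x) + (-17/280) * x^1 * sin (5*x) + (78/35) * x^2 * cos x + (27/35) * x^2 * cos (3*x) + (18/35) * x^3 * sin x + (18/35) * x^3 * sin (3*x)"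
    using sin_cos_squared_add[of x] unfolding multi_angle by algebra
  have b0: "(53/140) * x^0 * cos x \<ge> (53/140) * x^0 * ((1) * x^0 + (-1/2) * x^2 + (1/24) * x^4 + (-1/720) * x^6 + (1/40320) * x^8 + (-1/3628800) * x^10 + (1/479001600) * x^12 + (-1/87178291200) * x^14 + (1/20922789888000) * x^16 + (-1/6402373705728000) * x^18)"
    by (rule mult_left_mono[OF cos_lo10[of "x"]]) (use xpos in simp_all)
  have b1: "(-27/140) * x^0 * cos (3*x) \<ge> (-27/140) * x^0 * ((1) * (3*x)^0 + (-1/2) * (3*x)^2 + (1/24) * (3*x)^4 + (-1/720) * (3*x)^6 + (1/40320) * (3*x)^8 + (-1/3628800) * (3*x)^10 + (1/479001600) * (3*x)^12 + (-1/87178291200) * (3*x)^14 + (1/20922789888000) * (3*x)^16 + (-1/6402373705728000) * (3*x)^18 + (1/2432902008176640000) * (3*x)^20)"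
    by (rule mult_left_mono_neg[OF cos_hi11[of "3*x"]]) (use xpos in simp_all)
  have b2: "(-13/70) * x^0 * cos (5*x) \<ge> (-13/70) * x^0 * ((1) * (5*x)^0 + (-1/2) * (5*x)^2 + (1/24) * (5*x)^4 + (-1/720) * (5*x)^6 + (1/40320) * (5*x)^8 + (-1/3628800) * (5*x)^10 + (1/479001600) * (5*x)^12 + (-1/87178291200) * (5*x)^14 + (1/20922789888000) * (5*x)^16 + (-1/6402373705728000) * (5*x)^18 + (1/2432902008176640000) * (5*x)^20)"
    by (rule mult_left_mono_neg[OF cos_hi11[of "5*x"]]) (use xpos in simp_all)
  have b3: "(-19/14) * x^1 * sin x \<ge> (-19/14) * x^1 * ((1) * x^1 + (-1/6) * x^3 + (1/120) * x^5 + (-1/5040) * x^7 + (1/362880) * x^9 + (-1/39916800) * x^11 + (1/6227020800) * x^13 + (-1/1307674368000) * x^15 + (1/355687428096000) * x^17 + (-1/121645100408832000) * x^19 + (1/51090942171709440000) * x^21)"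
    by (rule mult_left_mono_neg[OF sin_hi11[of "x"]]) (use xpos in simp_all)
  have b4: "(-81/56) * x^1 * sin (3*x) \<ge> (-81/56) * x^1 * ((1) * (3*x)^1 + (-1/6) * (3*x)^3 + (1/120) * (3*x)^5 + (-1/5040) * (3*x)^7 + (1/362880) * (3*x)^9 + (-1/39916800) * (3*x)^11 + (1/6227020800) * (3*x)^13 + (-1/1307674368000) * (3*x)^15 + (1/355687428096000) * (3*x)^17 + (-1/121645100408832000) * (3*x)^19 + (1/51090942171709440000) * (3*x)^21)"
    by (rule mult_left_mono_neg[OF sin_hi11[of "3*x"]]) (use xpos in simp_all)
  have b5: "(-17/280) * x^1 * sin (5*x) \<ge> (-17/280) * x^1 * ((1) * (5*x)^1 + (-1/6) * (5*x)^3 + (1/120) * (5*x)^5 + (-1/5040) * (5*x)^7 + (1/362880) * (5*x)^9 + (-1/39916800) * (5*x)^11 + (1/6227020800) * (5*x)^13 + (-1/1307674368000) * (5*x)^15 + (1/355687428096000) * (5*x)^17 + (-1/121645100408832000) * (5*x)^19 + (1/51090942171709440000) * (5*x)^21)"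
    by (rule mult_left_mono_neg[OF sin_hi11[of "5*x"]]) (use xpos in simp_all)
  have b6: "(78/35) * x^2 * cos x \<ge> (78/35) * x^2 * ((1) * x^0 + (-1/2) * x^2 + (1/24) * x^4 + (-1/720) * x^6 + (1/40320) * x^8 + (-1/3628800) * x^10 + (1/479001600) * x^12 + (-1/87178291200) * x^14 + (1/20922789888000) * x^16 + (-1/6402373705728000) * x^18)"
    by (rule mult_left_mono[OF cos_lo10[of "x"]]) (use xpos in simp_all)
  have b7: "(27/35) * x^2 * cos (3*x) \<ge> (27/35) * x^2 * ((1) * (3*x)^0 + (-1/2) * (3*x)^2 + (1/24) * (3*x)^4 + (-1/720) * (3*x)^6 + (1/40320) * (3*x)^8 + (-1/3628800) * (3*x)^10 + (1/479001600) * (3*x)^12 + (-1/87178291200) * (3*x)^14 + (1/20922789888000) * (3*x)^16 + (-1/6402373705728000) * (3*x)^18)"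
    by (rule mult_left_mono[OF cos_lo10[of "3*x"]]) (use xpos in simp_all)
  have b8: "(18/35) * x^3 * sin x \<ge> (18/35) * x^3 * ((1) * x^1 + (-1/6) * x^3 + (1/120) * x^5 + (-1/5040) * x^7 + (1/362880) * x^9 + (-1/39916800) * x^11 + (1/6227020800) * x^13 + (-1/1307674368000) * x^15 + (1/355687428096000) * x^17 + (-1/121645100408832000) * x^19)"
    by (rule mult_left_mono[OF sin_lo10[of "x"]]) (use xpos in simp_all)
  have b9: "(18/35) * x^3 * sin (3*x) \<ge> (18/35) * x^3 * ((1) * (3*x)^1 + (-1/6) * (3*x)^3 + (1/120) * (3*x)^5 + (-1/5040) * (3*x)^7 + (1/362880) * (3*x)^9 + (-1/39916800) * (3*x)^11 + (1/6227020800) * (3*x)^13 + (-1/1307674368000) * (3*x)^15 + (1/355687428096000) * (3*x)^17 + (-1/121645100408832000) * (3*x)^19)"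
    by (rule mult_left_mono[OF sin_lo10[of "3*x"]]) (use xpos in simp_all)
  have low: "(53/140) * x^0 * cos x + (-27/140) * x^0 * cos (3*x) + (-13/70) * x^0 * cos (5*x) + (-19/14) * x^1 * sin x + (-81/56) * x^1 * sin (3*x) + (-17/280) * x^1 * sin (5*x) + (78/35) * x^2 * cos x + (27/35) * x^2 * cos (3*x) + (18/35) * x^3 * sin x + (18/35) * x^3 * sin (3*x) \<ge> (53/140) * x^0 * ((1) * x^0 + (-1/2) * x^2 + (1/24) * x^4 + (-1/720) * x^6 + (1/40320) * x^8 + (-1/3628800) * x^10 + (1/479001600) * x^12 + (-1/87178291200) * x^14 + (1/20922789888000) * x^16 + (-1/6402373705728000) * x^18) + (-27/140) * x^0 * ((1) * (3*x)^0 + (-1/2) * (3*x)^2 + (1/24) * (3*x)^4 + (-1/720) * (3*x)^6 + (1/40320) * (3*x)^8 + (-1/3628800) * (3*x)^10 + (1/479001600) * (3*x)^12 + (-1/87178291200) * (3*x)^14 + (1/20922789888000) * (3*x)^16 + (-1/6402373705728000) * (3*x)^18 + (1/2432902008176640000) * (3*x)^20) + (-13/70) * x^0 * ((1) * (5*x)^0 + (-1/2) * (5*x)^2 + (1/24) * (5*x)^4 + (-1/720) * (5*x)^6 + (1/40320) * (5*x)^8 + (-1/3628800) * (5*x)^10 + (1/479001600) * (5*x)^12 + (-1/87178291200) * (5*x)^14 + (1/20922789888000) * (5*x)^16 + (-1/6402373705728000) * (5*x)^18 + (1/2432902008176640000) * (5*x)^20) + (-19/14) * x^1 * ((1) * x^1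 + (-1/6) * x^3 + (1/120) * x^5 + (-1/5040) * x^7 + (1/362880) * x^9 + (-1/39916800) * x^11 + (1/6227020800) * x^13 + (-1/1307674368000) * x^15 + (1/355687428096000) * x^17 + (-1/121645100408832000) * x^19 + (1/51090942171709440000) * x^21) + (-81/56) * x^1 * ((1) * (3*x)^1 + (-1/6) * (3*x)^3 + (1/120) * (3*x)^5 + (-1/5040) * (3*x)^7 + (1/362880) * (3*x)^9 + (-1/39916800) * (3*x)^11 + (1/6227020800) * (3*x)^13 + (-1/1307674368000) * (3*x)^15 + (1/355687428096000) * (3*x)^17 + (-1/121645100408832000) * (3*x)^19 + (1/51090942171709440000) * (3*x)^21) + (-17/280) * x^1 * ((1) * (5*x)^1 + (-1/6) * (5*x)^3 + (1/120) * (5*x)^5 + (-1/5040) * (5*x)^7 + (1/362880) * (5*x)^9 + (-1/39916800) * (5*x)^11 + (1/6227020800) * (5*x)^13 + (-1/1307674368000) * (5*x)^15 + (1/355687428096000) * (5*x)^17 + (-1/121645100408832000) * (5*x)^19 + (1/51090942171709440000) * (5*x)^21) + (78/35) * x^2 * ((1) * x^0 + (-1/2) * x^2 + (1/24) * x^4 + (-1/720) * x^6 + (1/40320) * x^8 + (-1/3628800) * x^10 + (1/479001600) * x^12 + (-1/87178291200) * x^14 + (1/20922789888000) * x^16 + (-1/6402373705728000) * x^18) + (27/35) * x^2 * ((1) * (3*x)^0 + (-1/2) * (3*x)^2 + (1/24) * (3*x)^4 + (-1/720) * (3*x)^6 + (1/40320) * (3*x)^8 + (-1/3628800) * (3*x)^10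 + (1/479001600) * (3*x)^12 + (-1/87178291200) * (3*x)^14 + (1/20922789888000) * (3*x)^16 + (-1/6402373705728000) * (3*x)^18) + (18/35) * x^3 * ((1) * x^1 + (-1/6) * x^3 + (1/120) * x^5 + (-1/5040) * x^7 + (1/362880) * x^9 + (-1/39916800) * x^11 + (1/6227020800) * x^13 + (-1/1307674368000) * x^15 + (1/355687428096000) * x^17 + (-1/121645100408832000) * x^19) + (18/35) * x^3 * ((1) * (3*x)^1 + (-1/6) * (3*x)^3 + (1/120) * (3*x)^5 + (-1/5040) * (3*x)^7 + (1/362880) * (3*x)^9 + (-1/39916800) * (3*x)^11 + (1/6227020800) * (3*x)^13 + (-1/1307674368000) * (3*x)^15 + (1/355687428096000) * (3*x)^17 + (-1/121645100408832000) * (3*x)^19)"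
    by (intro add_mono b0 b1 b2 b3 b4 b5 b6 b7 b8 b9 order_refl)
  have eq: "(53/140) * x^0 * ((1) * x^0 + (-1/2) * x^2 + (1/24) * x^4 + (-1/720) * x^6 + (1/40320) * x^8 + (-1/3628800) * x^10 + (1/479001600) * x^12 + (-1/87178291200) * x^14 + (1/20922789888000) * x^16 + (-1/6402373705728000) * x^18) + (-27/140) * x^0 * ((1) * (3*x)^0 + (-1/2) * (3*x)^2 + (1/24) * (3*x)^4 + (-1/720) * (3*x)^6 + (1/40320) * (3*x)^8 + (-1/3628800) * (3*x)^10 + (1/479001600) * (3*x)^12 + (-1/87178291200) * (3*x)^14 + (1/20922789888000) * (3*x)^16 + (-1/6402373705728000) * (3*x)^18 + (1/2432902008176640000) * (3*x)^20) + (-13/70) * x^0 * ((1) * (5*x)^0 + (-1/2) * (5*x)^2 + (1/24) * (5*x)^4 + (-1/720) * (5*x)^6 + (1/40320) * (5*x)^8 + (-1/3628800) * (5*x)^10 + (1/479001600) * (5*x)^12 + (-1/87178291200) * (5*x)^14 + (1/20922789888000) * (5*x)^16 + (-1/6402373705728000) * (5*x)^18 + (1/2432902008176640000) * (5*x)^20) + (-19/14) * x^1 * ((1) * x^1 + (-1/6) * x^3 + (1/120) * x^5 + (-1/5040) * x^7 + (1/362880) * x^9 + (-1/39916800) * x^11 + (1/6227020800) * x^13 + (-1/1307674368000) * x^15 + (1/355687428096000) * x^17 + (-1/121645100408832000) * x^19 + (1/51090942171709440000) * x^21) + (-81/56) * x^1 * ((1) * (3*x)^1 + (-1/6) * (3*x)^3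 + (1/120) * (3*x)^5 + (-1/5040) * (3*x)^7 + (1/362880) * (3*x)^9 + (-1/39916800) * (3*x)^11 + (1/6227020800) * (3*x)^13 + (-1/1307674368000) * (3*x)^15 + (1/355687428096000) * (3*x)^17 + (-1/121645100408832000) * (3*x)^19 + (1/51090942171709440000) * (3*x)^21) + (-17/280) * x^1 * ((1) * (5*x)^1 + (-1/6) * (5*x)^3 + (1/120) * (5*x)^5 + (-1/5040) * (5*x)^7 + (1/362880) * (5*x)^9 + (-1/39916800) * (5*x)^11 + (1/6227020800) * (5*x)^13 + (-1/1307674368000) * (5*x)^15 + (1/355687428096000) * (5*x)^17 + (-1/121645100408832000) * (5*x)^19 + (1/51090942171709440000) * (5*x)^21) + (78/35) * x^2 * ((1) * x^0 + (-1/2) * x^2 + (1/24) * x^4 + (-1/720) * x^6 + (1/40320) * x^8 + (-1/3628800) * x^10 + (1/479001600) * x^12 + (-1/87178291200) * x^14 + (1/20922789888000) * x^16 + (-1/6402373705728000) * x^18) + (27/35) * x^2 * ((1) * (3*x)^0 + (-1/2) * (3*x)^2 + (1/24) * (3*x)^4 + (-1/720) * (3*x)^6 + (1/40320) * (3*x)^8 + (-1/3628800) * (3*x)^10 + (1/479001600) * (3*x)^12 + (-1/87178291200) * (3*x)^14 + (1/20922789888000) * (3*x)^16 + (-1/6402373705728000) * (3*x)^18) + (18/35) * x^3 * ((1) * x^1 + (-1/6) * x^3 + (1/120) * x^5 + (-1/5040) * x^7 + (1/362880) * x^9 + (-1/39916800) * x^11 + (1/6227020800) * x^13 + (-1/1307674368000)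 * x^15 + (1/355687428096000) * x^17 + (-1/121645100408832000) * x^19) + (18/35) * x^3 * ((1) * (3*x)^1 + (-1/6) * (3*x)^3 + (1/120) * (3*x)^5 + (-1/5040) * (3*x)^7 + (1/362880) * (3*x)^9 + (-1/39916800) * (3*x)^11 + (1/6227020800) * (3*x)^13 + (-1/1307674368000) * (3*x)^15 + (1/355687428096000) * (3*x)^17 + (-1/121645100408832000) * (3*x)^19) = x^12 * ((5242880000000/413070664043264787) * (987/400 - x^2)^5 + (204269158400000/4543777304475912657) * (x^2)^1 * (987/400 - x^2)^4 + (3782604191334400/59069104958186864541) * (x^2)^2 * (987/400 - x^2)^3 + (892624694250496/19689701652728954847) * (x^2)^3 * (987/400 - x^2)^2 + (22351264943031430149282109/1406680171425375971087867904000) * (x^2)^4 * (987/400 - x^2)^1 + (24708238666941861074769223/14066801714253759710878679040000) * (x^2)^5)"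
    by algebra
  have pos: "0 < x^12 * ((5242880000000/413070664043264787) * (987/400 - x^2)^5 + (204269158400000/4543777304475912657) * (x^2)^1 * (987/400 - x^2)^4 + (3782604191334400/59069104958186864541) * (x^2)^2 * (987/400 - x^2)^3 + (892624694250496/19689701652728954847) * (x^2)^3 * (987/400 - x^2)^2 + (22351264943031430149282109/1406680171425375971087867904000) * (x^2)^4 * (987/400 - x^2)^1 + (24708238666941861074769223/14066801714253759710878679040000) * (x^2)^5)"
    using xpos y by (intro mult_pos_pos add_nonneg_pos add_nonneg_nonneg mult_nonneg_nonneg zero_le_power zero_less_power) simp_all
  show ?thesis using id low eq pos by linarith
qed

lemma E_U3:
  assumes xpos: "0 < x" and xle: "x \<le> pi/2"
  shows "0 < (-3) * x^0 * sin x^1 * cos x^1 + (3) * x^1 * sin x^0 * cos x^2 + (1) * x^1 * sin x^2 * cos x^0"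
proof -
  have y: "x^2 \<le> 987/400" using xle_sq[OF xpos xle] .
  have id: "(-3) * x^0 * sin x^1 * cos x^1 + (3) * x^1 * sin x^0 * cos x^2 + (1) * x^1 * sin x^2 * cos x^0 = (-3/2) * x^0 * sin (2*x) + (2) * x^1 + (1) * x^1 * cos (2*x)"
    using sin_cos_squared_add[of x] unfolding multi_angle by algebra
  have b0: "(-3/2) * x^0 * sin (2*x) \<ge> (-3/2) * x^0 * ((1) * (2*x)^1 + (-1/6) * (2*x)^3 + (1/120) * (2*x)^5 + (-1/5040) * (2*x)^7 + (1/362880) * (2*x)^9)"
    by (rule mult_left_mono_neg[OF sin_hi5[of "2*x"]]) (use xpos in simp_all)
  have b2: "(1) * x^1 * cos (2*x) \<ge> (1) * x^1 * ((1) * (2*x)^0 + (-1/2) * (2*x)^2 + (1/24) * (2*x)^4 + (-1/720) * (2*x)^6)"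
    by (rule mult_left_mono[OF cos_lo4[of "2*x"]]) (use xpos in simp_all)
  have low: "(-3/2) * x^0 * sin (2*x) + (2) * x^1 + (1) * x^1 * cos (2*x) \<ge> (-3/2) * x^0 * ((1) * (2*x)^1 + (-1/6) * (2*x)^3 + (1/120) * (2*x)^5 + (-1/5040) * (2*x)^7 + (1/362880) * (2*x)^9) + (2) * x^1 + (1) * x^1 * ((1) * (2*x)^0 + (-1/2) * (2*x)^2 + (1/24) * (2*x)^4 + (-1/720) * (2*x)^6)"
    by (intro add_mono b0 b2 order_refl)
  have eq: "(-3/2) * x^0 * ((1) * (2*x)^1 + (-1/6) * (2*x)^3 + (1/120) * (2*x)^5 + (-1/5040) * (2*x)^7 + (1/362880) * (2*x)^9) + (2) * x^1 + (1) * x^1 * ((1) * (2*x)^0 + (-1/2) * (2*x)^2 + (1/24) * (2*x)^4 + (-1/720) * (2*x)^6) = x^5 * ((128000/2922507) * (987/400 - x^2)^2 + (21760/324723) * (x^2)^1 * (987/400 - x^2)^1 + (102758/4870845) * (x^2)^2)"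
    by algebra
  have pos: "0 < x^5 * ((128000/2922507) * (987/400 - x^2)^2 + (21760/324723) * (x^2)^1 * (987/400 - x^2)^1 + (102758/4870845) * (x^2)^2)"
    using xpos y by (intro mult_pos_pos add_nonneg_pos add_nonneg_nonneg mult_nonneg_nonneg zero_le_power zero_less_power) simp_all
  show ?thesis using id low eq pos by linarith
qed

lemma E_W75:
  assumes xpos: "0 < x" and xle: "x \<le> pi/2"
  shows "0 < (-12/5) * x^0 * sin x^2 * cos x^0 + (9/5) * x^1 * sin x^1 * cos x^1 + (3/5) * x^2 * sin x^0 * cos x^2 + (1) * x^2 * sin x^2 * cos x^0"
proof -
  have y: "x^2 \<le> 987/400" using xle_sq[OF xpos xle] .
  have id: "(-12/5) * x^0 * sin x^2 * cos x^0 + (9/5) * x^1 * sin x^1 * cos x^1 + (3/5) * x^2 * sin x^0 * cos x^2 + (1) * x^2 * sin x^2 * cos x^0 = (-6/5) * x^0 + (6/5) * x^0 * cos (2*x) + (9/10) * x^1 * sin (2*x) + (4/5) * x^2 + (-1/5) * x^2 * cos (2*x)"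
    using sin_cos_squared_add[of x] unfolding multi_angle by algebra
  have b1: "(6/5) * x^0 * cos (2*x) \<ge> (6/5) * x^0 * ((1) * (2*x)^0 + (-1/2) * (2*x)^2 + (1/24) * (2*x)^4 + (-1/720) * (2*x)^6 + (1/40320) * (2*x)^8 + (-1/3628800) * (2*x)^10)"
    by (rule mult_left_mono[OF cos_lo6[of "2*x"]]) (use xpos in simp_all)
  have b2: "(9/10) * x^1 * sin (2*x) \<ge> (9/10) * x^1 * ((1) * (2*x)^1 + (-1/6) * (2*x)^3 + (1/120) * (2*x)^5 + (-1/5040) * (2*x)^7 + (1/362880) * (2*x)^9 + (-1/39916800) * (2*x)^11)"
    by (rule mult_left_mono[OF sin_lo6[of "2*x"]]) (use xpos in simp_all)
  have b4: "(-1/5) * x^2 * cos (2*x) \<ge> (-1/5) * x^2 * ((1) * (2*x)^0 + (-1/2) * (2*x)^2 + (1/24) * (2*x)^4 + (-1/720) * (2*x)^6 + (1/40320) * (2*x)^8 + (-1/3628800) * (2*x)^10 + (1/479001600) * (2*x)^12)"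
    by (rule mult_left_mono_neg[OF cos_hi7[of "2*x"]]) (use xpos in simp_all)
  have low: "(-6/5) * x^0 + (6/5) * x^0 * cos (2*x) + (9/10) * x^1 * sin (2*x) + (4/5) * x^2 + (-1/5) * x^2 * cos (2*x) \<ge> (-6/5) * x^0 + (6/5) * x^0 * ((1) * (2*x)^0 + (-1/2) * (2*x)^2 + (1/24) * (2*x)^4 + (-1/720) * (2*x)^6 + (1/40320) * (2*x)^8 + (-1/3628800) * (2*x)^10) + (9/10) * x^1 * ((1) * (2*x)^1 + (-1/6) * (2*x)^3 + (1/120) * (2*x)^5 + (-1/5040) * (2*x)^7 + (1/362880) * (2*x)^9 + (-1/39916800) * (2*x)^11) + (4/5) * x^2 + (-1/5) * x^2 * ((1) * (2*x)^0 + (-1/2) * (2*x)^2 + (1/24) * (2*x)^4 + (-1/720) * (2*x)^6 + (1/40320) * (2*x)^8 + (-1/3628800) * (2*x)^10 + (1/479001600) * (2*x)^12)"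
    by (intro add_mono b1 b2 b4 order_refl)
  have eq: "(-6/5) * x^0 + (6/5) * x^0 * ((1) * (2*x)^0 + (-1/2) * (2*x)^2 + (1/24) * (2*x)^4 + (-1/720) * (2*x)^6 + (1/40320) * (2*x)^8 + (-1/3628800) * (2*x)^10) + (9/10) * x^1 * ((1) * (2*x)^1 + (-1/6) * (2*x)^3 + (1/120) * (2*x)^5 + (-1/5040) * (2*x)^7 + (1/362880) * (2*x)^9 + (-1/39916800) * (2*x)^11) + (4/5) * x^2 + (-1/5) * x^2 * ((1) * (2*x)^0 + (-1/2) * (2*x)^2 + (1/24) * (2*x)^4 + (-1/720) * (2*x)^6 + (1/40320) * (2*x)^8 + (-1/3628800) * (2*x)^10 + (1/479001600) * (2*x)^12) = x^8 * ((10240000/60574802589) * (987/400 - x^2)^3 + (27351040/60574802589) * (x^2)^1 * (987/400 - x^2)^2 + (1332869248/3331614142395) * (x^2)^2 * (987/400 - x^2)^1 + (9651606044/83290353559875) * (x^2)^3)"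
    by algebra
  have pos: "0 < x^8 * ((10240000/60574802589) * (987/400 - x^2)^3 + (27351040/60574802589) * (x^2)^1 * (987/400 - x^2)^2 + (1332869248/3331614142395) * (x^2)^2 * (987/400 - x^2)^1 + (9651606044/83290353559875) * (x^2)^3)"
    using xpos y by (intro mult_pos_pos add_nonneg_pos add_nonneg_nonneg mult_nonneg_nonneg zero_le_power zero_less_power) simp_all
  show ?thesis using id low eq pos by linarith
qed

lemma E_H:
  assumes xpos: "0 < x" and xle: "x \<le> pi/2"
  shows "0 < (81/35) * x^0 * sin x^2 * cos x^1 + (-57/35) * x^1 * sin x^1 * cos x^2 + (1/35) * x^1 * sin x^3 * cos x^0 + (-24/35) * x^2 * sin x^0 * cos x^3 + (-36/35) * x^2 * sin x^2 * cos x^1"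
proof -
  have y: "x^2 \<le> 987/400" using xle_sq[OF xpos xle] .
  have id: "(81/35) * x^0 * sin x^2 * cos x^1 + (-57/35) * x^1 * sin x^1 * cos x^2 + (1/35) * x^1 * sin x^3 * cos x^0 + (-24/35) * x^2 * sin x^0 * cos x^3 + (-36/35) * x^2 * sin x^2 * cos x^1 = (81/140) * x^0 * cos x + (-81/140) * x^0 * cos (3*x) + (-27/70) * x^1 * sin x + (-29/70) * x^1 * sin (3*x) + (-27/35) * x^2 * cos x + (3/35) * x^2 * cos (3*x)"
    using sin_cos_squared_add[of x] unfolding multi_angle by algebra
  have b0: "(81/140) * x^0 * cos x \<ge> (81/140) * x^0 * ((1) * x^0 + (-1/2) * x^2 + (1/24) * x^4 + (-1/720) * x^6 + (1/40320) * x^8 + (-1/3628800) * x^10 + (1/479001600) * x^12 + (-1/87178291200) * x^14)"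
    by (rule mult_left_mono[OF cos_lo8[of "x"]]) (use xpos in simp_all)
  have b1: "(-81/140) * x^0 * cos (3*x) \<ge> (-81/140) * x^0 * ((1) * (3*x)^0 + (-1/2) * (3*x)^2 + (1/24) * (3*x)^4 + (-1/720) * (3*x)^6 + (1/40320) * (3*x)^8 + (-1/3628800) * (3*x)^10 + (1/479001600) * (3*x)^12 + (-1/87178291200) * (3*x)^14 + (1/20922789888000) * (3*x)^16)"
    by (rule mult_left_mono_neg[OF cos_hi9[of "3*x"]]) (use xpos in simp_all)
  have b2: "(-27/70) * x^1 * sin x \<ge> (-27/70) * x^1 * ((1) * x^1 + (-1/6) * x^3 + (1/120) * x^5 + (-1/5040) * x^7 + (1/362880) * x^9 + (-1/39916800) * x^11 + (1/6227020800) * x^13 + (-1/1307674368000) * x^15 + (1/355687428096000) * x^17)"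
    by (rule mult_left_mono_neg[OF sin_hi9[of "x"]]) (use xpos in simp_all)
  have b3: "(-29/70) * x^1 * sin (3*x) \<ge> (-29/70) * x^1 * ((1) * (3*x)^1 + (-1/6) * (3*x)^3 + (1/120) * (3*x)^5 + (-1/5040) * (3*x)^7 + (1/362880) * (3*x)^9 + (-1/39916800) * (3*x)^11 + (1/6227020800) * (3*x)^13 + (-1/1307674368000) * (3*x)^15 + (1/355687428096000) * (3*x)^17)"
    by (rule mult_left_mono_neg[OF sin_hi9[of "3*x"]]) (use xpos in simp_all)
  have b4: "(-27/35) * x^2 * cos x \<ge> (-27/35) * x^2 * ((1) * x^0 + (-1/2) * x^2 + (1/24) * x^4 + (-1/720) * x^6 + (1/40320) * x^8 + (-1/3628800) * x^10 + (1/479001600) * x^12 + (-1/87178291200) * x^14 + (1/20922789888000) * x^16)"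
    by (rule mult_left_mono_neg[OF cos_hi9[of "x"]]) (use xpos in simp_all)
  have b5: "(3/35) * x^2 * cos (3*x) \<ge> (3/35) * x^2 * ((1) * (3*x)^0 + (-1/2) * (3*x)^2 + (1/24) * (3*x)^4 + (-1/720) * (3*x)^6 + (1/40320) * (3*x)^8 + (-1/3628800) * (3*x)^10 + (1/479001600) * (3*x)^12 + (-1/87178291200) * (3*x)^14)"
    by (rule mult_left_mono[OF cos_lo8[of "3*x"]]) (use xpos in simp_all)
  have low: "(81/140) * x^0 * cos x + (-81/140) * x^0 * cos (3*x) + (-27/70) * x^1 * sin x + (-29/70) * x^1 * sin (3*x) + (-27/35) * x^2 * cos x + (3/35) * x^2 * cos (3*x) \<ge> (81/140) * x^0 * ((1) * x^0 + (-1/2) * x^2 + (1/24) * x^4 + (-1/720) * x^6 + (1/40320) * x^8 + (-1/3628800) * x^10 + (1/479001600) * x^12 + (-1/87178291200) * x^14) + (-81/140) * x^0 * ((1) * (3*x)^0 + (-1/2) * (3*x)^2 + (1/24) * (3*x)^4 + (-1/720) * (3*x)^6 + (1/40320) * (3*x)^8 + (-1/3628800) * (3*x)^10 + (1/479001600) * (3*x)^12 + (-1/87178291200) * (3*x)^14 + (1/20922789888000) * (3*x)^16) + (-27/70) * x^1 * ((1) * x^1 + (-1/6) * x^3 + (1/120) * x^5 + (-1/5040) * x^7 + (1/362880) * x^9 + (-1/39916800) * x^11 + (1/6227020800) * x^13 + (-1/1307674368000) * x^15 + (1/355687428096000) * x^17) + (-29/70) * x^1 * ((1) * (3*x)^1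 + (-1/6) * (3*x)^3 + (1/120) * (3*x)^5 + (-1/5040) * (3*x)^7 + (1/362880) * (3*x)^9 + (-1/39916800) * (3*x)^11 + (1/6227020800) * (3*x)^13 + (-1/1307674368000) * (3*x)^15 + (1/355687428096000) * (3*x)^17) + (-27/35) * x^2 * ((1) * x^0 + (-1/2) * x^2 + (1/24) * x^4 + (-1/720) * x^6 + (1/40320) * x^8 + (-1/3628800) * x^10 + (1/479001600) * x^12 + (-1/87178291200) * x^14 + (1/20922789888000) * x^16) + (3/35) * x^2 * ((1) * (3*x)^0 + (-1/2) * (3*x)^2 + (1/24) * (3*x)^4 + (-1/720) * (3*x)^6 + (1/40320) * (3*x)^8 + (-1/3628800) * (3*x)^10 + (1/479001600) * (3*x)^12 + (-1/87178291200) * (3*x)^14)"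
    by (intro add_mono b0 b1 b2 b3 b4 b5 order_refl)
  have eq: "(81/140) * x^0 * ((1) * x^0 + (-1/2) * x^2 + (1/24) * x^4 + (-1/720) * x^6 + (1/40320) * x^8 + (-1/3628800) * x^10 + (1/479001600) * x^12 + (-1/87178291200) * x^14) + (-81/140) * x^0 * ((1) * (3*x)^0 + (-1/2) * (3*x)^2 + (1/24) * (3*x)^4 + (-1/720) * (3*x)^6 + (1/40320) * (3*x)^8 + (-1/3628800) * (3*x)^10 + (1/479001600) * (3*x)^12 + (-1/87178291200) * (3*x)^14 + (1/20922789888000) * (3*x)^16) + (-27/70) * x^1 * ((1) * x^1 + (-1/6) * x^3 + (1/120) * x^5 + (-1/5040) * x^7 + (1/362880) * x^9 + (-1/39916800) * x^11 + (1/6227020800) * x^13 + (-1/1307674368000) * x^15 + (1/355687428096000) * x^17) + (-29/70) * x^1 * ((1) * (3*x)^1 + (-1/6) * (3*x)^3 + (1/120) * (3*x)^5 + (-1/5040) * (3*x)^7 + (1/362880) * (3*x)^9 + (-1/39916800) * (3*x)^11 + (1/6227020800) * (3*x)^13 + (-1/1307674368000) * (3*x)^15 + (1/355687428096000) * (3*x)^17) + (-27/35) * x^2 * ((1) * x^0 + (-1/2) * x^2 + (1/24) * x^4 + (-1/720) * x^6 + (1/40320) * x^8 + (-1/3628800) * x^10 + (1/479001600) * x^12 + (-1/87178291200) * x^14 + (1/20922789888000) * x^16) + (3/35) * x^2 * ((1) * (3*x)^0 + (-1/2) * (3*x)^2 + (1/24) * (3*x)^4 + (-1/720) * (3*x)^6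 + (1/40320) * (3*x)^8 + (-1/3628800) * (3*x)^10 + (1/479001600) * (3*x)^12 + (-1/87178291200) * (3*x)^14) = x^10 * ((3276800000/139503770362467) * (987/400 - x^2)^4 + (123965440000/1534541473987137) * (x^2)^1 * (987/400 - x^2)^3 + (697068285440/6649679720610927) * (x^2)^2 * (987/400 - x^2)^2 + (22550271120753307/371414838213032140800) * (x^2)^3 * (987/400 - x^2)^1 + (5656708269655458319/434091092161481314560000) * (x^2)^4)"
    by algebra
  have pos: "0 < x^10 * ((3276800000/139503770362467) * (987/400 - x^2)^4 + (123965440000/1534541473987137) * (x^2)^1 * (987/400 - x^2)^3 + (697068285440/6649679720610927) * (x^2)^2 * (987/400 - x^2)^2 + (22550271120753307/371414838213032140800) * (x^2)^3 * (987/400 - x^2)^1 + (5656708269655458319/434091092161481314560000) * (x^2)^4)"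
    using xpos y by (intro mult_pos_pos add_nonneg_pos add_nonneg_nonneg mult_nonneg_nonneg zero_le_power zero_less_power) simp_all
  show ?thesis using id low eq pos by linarith
qed



definition eU :: "real \<Rightarrow> real" where "eU x = (1) * x^0 * sin x^3 * cos x^1 + (1) * x^1 * sin x^2 * cos x^2 + (1) * x^1 * sin x^4 * cos x^0 + (-2) * x^2 * sin x^1 * cos x^3 + (-2) * x^2 * sin x^3 * cos x^1"

lemma eU_pos: "0 < x \<Longrightarrow> x \<le> pi/2 \<Longrightarrow> 0 < eU x"
  unfolding eU_def by (rule E_U)

definition eW :: "real \<Rightarrow> real" where "eW x = (-3) * x^0 * sin x^2 * cos x^1 + (6) * x^1 * sin x^1 * cos x^2 + (5) * x^1 * sin x^3 * cos x^0 + (-3) * x^2 * sin x^0 * cos x^3 + (-3) * x^2 * sin x^2 * cos x^1 + (-2) * x^3 * sin x^1 * cos x^2 + (-2) * x^3 * sin x^3 * cos x^0"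

lemma eW_pos: "0 < x \<Longrightarrow> x \<le> pi/2 \<Longrightarrow> 0 < eW x"
  unfolding eW_def by (rule E_W)

definition eG :: "real \<Rightarrow> real" where "eG x = (3) * x^0 * sin x^2 * cos x^3 + (1/35) * x^0 * sin x^4 * cos x^1 + (-6) * x^1 * sin x^1 * cos x^4 + (-5) * x^1 * sin x^3 * cos x^2 + (1/35) * x^1 * sin x^5 * cos x^0 + (3) * x^2 * sin x^0 * cos x^5 + (102/35) * x^2 * sin x^2 * cos x^3 + (-3/35) * x^2 * sin x^4 * cos x^1 + (72/35) * x^3 * sin x^1 * cos x^4 + (72/35) * x^3 * sin x^3 * cos x^2"

lemma eG_pos: "0 < x \<Longrightarrow> x \<le> pi/2 \<Longrightarrow> 0 < eG x"
  unfolding eG_def by (rule E_G)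

definition eU3 :: "real \<Rightarrow> real" where "eU3 x = (-3) * x^0 * sin x^1 * cos x^1 + (3) * x^1 * sin x^0 * cos x^2 + (1) * x^1 * sin x^2 * cos x^0"

lemma eU3_pos: "0 < x \<Longrightarrow> x \<le> pi/2 \<Longrightarrow> 0 < eU3 x"
  unfolding eU3_def by (rule E_U3)

definition eW75 :: "real \<Rightarrow> real" where "eW75 x = (-12/5) * x^0 * sin x^2 * cos x^0 + (9/5) * x^1 * sin x^1 * cos x^1 + (3/5) * x^2 * sin x^0 * cos x^2 + (1) * x^2 * sin x^2 * cos x^0"

lemma eW75_pos: "0 < x \<Longrightarrow> x \<le> pi/2 \<Longrightarrow> 0 < eW75 x"
  unfolding eW75_def by (rule E_W75)

definition eH :: "real \<Rightarrow> real" where "eH x = (81/35) * x^0 * sin x^2 * cos x^1 + (-57/35) * x^1 * sin x^1 * cos x^2 + (1/35) * x^1 * sin x^3 * cos x^0 + (-24/35) * x^2 * sin x^0 * cos x^3 + (-36/35) * x^2 * sin x^2 * cos x^1"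

lemma eH_pos: "0 < x \<Longrightarrow> x \<le> pi/2 \<Longrightarrow> 0 < eH x"
  unfolding eH_def by (rule E_H)

definition tt :: "real \<Rightarrow> real" where "tt x = sin x - x * cos x"
definition Uf :: "real \<Rightarrow> real" where "Uf x = x * sin x^2 / (cos x * (sin x - x * cos x))"
definition Ff :: "real \<Rightarrow> real" where
  "Ff x = ((x^2 - 1) * (sin x - x * cos x)^2 + x^4 * cos x^2 + (2 * x^3 - 3 * x) * cos x * (sin x - x * cos x)) / (sin x - x * cos x)^2"

lemma tt_pos: assumes "0 < x" "x \<le> pi/2" shows "0 < sin x - x * cos x"
proof -
  have s: "x - x^3/6 \<le> sin x" using taylor_alt[of x 1] assms by (simp add: eval_nat_numeral fact_Suc)
  have c: "cos x \<le> 1 - x^2/2 + x^4/24" using taylor_alt[of x 2] assms by (simp add: eval_nat_numeral fact_Suc)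
  have "x * cos x \<le> x * (1 - x^2/2 + x^4/24)" using c assms by (intro mult_left_mono) auto
  moreover have "x^2 \<le> 987/400" using xle_sq assms by blast
  moreover have "0 < x^3 * (8 - x^2)" using assms calculation(2) by (intro mult_pos_pos) auto
  ultimately show ?thesis using s by (simp add: algebra_simps power_numeral_reduce)
qed

lemma sc_pos: assumes "0 < x" "x < pi/2" shows "0 < sin x" "0 < cos x"
  using assms by (auto intro: sin_gt_zero cos_gt_zero)

lemma alg_g1:
  fixes s c x q t :: real
  assumes c: "c \<noteq> 0" and t: "t \<noteq> 0" and te: "t = s - x * c" and p: "s^2 + c^2 = 1"
  shows "(q * (x * t * s^2) - -(2 * x^2 * c - x * s - c * s^2)) / (t^2 * c) = (q-1) * (x * s^2/(c * t)) + (((x^2 - 1) * t^2 + x^4 * c^2 + (2 * x^3 - 3 * x) * c * t) / t^2)"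
proof -
  have "(q * (x * t * s^2) - -(2 * x^2 * c - x * s - c * s^2)) = ((q-1) * (x * s^2/(c * t)) + (((x^2 - 1) * t^2 + x^4 * c^2 + (2 * x^3 - 3 * x) * c * t) / t^2)) * (t^2 * c)"
    using c t by (simp add: field_simps power2_eq_square) (use te p in algebra)
  then show ?thesis using c t by (simp add: field_simps)
qed

lemma g1_eq: assumes "0 < x" "x < pi/2" shows "g1 q x = (q - 1) * Uf x + Ff x"
proof -
  have c: "cos x \<noteq> 0" using sc_pos assms by force
  have t: "sin x - x * cos x \<noteq> 0" using tt_pos assms by force
  show ?thesis
    unfolding g1_def fA_def fB_def fC_def Uf_def Ff_def
    using alg_g1[OF c t refl sin_cos_squared_add[of x], of q] by simp
qed


lemma nzs: assumes "0 < x" "x < pi/2" shows "cos x \<noteq> 0" "sin x - x * cos x \<noteq> 0"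
  using sc_pos[OF assms] tt_pos[of x] assms by auto

lemma two_m1: "(2::nat) - Suc 0 = 1" "(3::nat) - Suc 0 = 2" "(4::nat) - Suc 0 = 3" "(5::nat) - Suc 0 = 4" by simp_all

lemma dUf: assumes "0 < x" "x < pi/2"
  shows "DERIV Uf x :> eU x / (cos x^2 * (sin x - x * cos x)^2)"
proof -
  have ct: "cos x * (sin x - x * cos x) \<noteq> 0" using nzs[OF assms] by simp
  show ?thesis
  unfolding Uf_def
  apply (rule derivative_eq_intros refl ct)+
  apply (subst frac_eq_eq)
  subgoal using nzs[OF assms] by simp
  subgoal using nzs[OF assms] by simp
  unfolding eU_def of_nat_numeral two_m1 power_one_right
  by (algebra | use sin_cos_squared_add[of x] in algebra)
qed

lemma dFf: assumes "0 < x" "x \<le> pi/2"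
  shows "DERIV Ff x :> eW x / (sin x - x * cos x)^3"
proof -
  have t: "sin x - x * cos x \<noteq> 0" using tt_pos assms by force
  have t2: "(sin x - x * cos x)^2 \<noteq> 0" using t by simp
  show ?thesis
  unfolding Ff_def
  apply (rule derivative_eq_intros refl t t2)+
  apply (subst frac_eq_eq)
  subgoal using t by simp
  subgoal using t by simp
  unfolding eW_def of_nat_numeral two_m1 power_one_right
  by (algebra | use sin_cos_squared_add[of x] in algebra)
qed


lemma Uf_gt3: assumes "0 < x" "x < pi/2" shows "3 < Uf x"
proof -
  have ct: "0 < cos x * (sin x - x * cos x)" using sc_pos[OF assms] tt_pos[of x] assms by simp
  have "x * sin x^2 - 3 * (cos x * (sin x - x * cos x)) = eU3 x" unfolding eU3_def by algebra
  then have "3 * (cos x * (sin x - x * cos x)) < x * sin x^2" using eU3_pos[of x] assms by simp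
  then show ?thesis unfolding Uf_def using ct by (simp add: less_divide_eq)
qed

lemma Ff_gt: assumes "0 < x" "x < pi/2" shows "7/5 < Ff x"
proof -
  have t: "0 < (sin x - x * cos x)^2" using tt_pos[of x] assms by simp
  have "((x^2 - 1) * (sin x - x * cos x)^2 + x^4 * cos x^2 + (2 * x^3 - 3 * x) * cos x * (sin x - x * cos x)) - 7/5 * (sin x - x * cos x)^2 = eW75 x"
    unfolding eW75_def by (algebra | use sin_cos_squared_add[of x] in algebra)
  then have "7/5 * (sin x - x * cos x)^2 < ((x^2 - 1) * (sin x - x * cos x)^2 + x^4 * cos x^2 + (2 * x^3 - 3 * x) * cos x * (sin x - x * cos x))"
    using eW75_pos[of x] assms by simp
  then show ?thesis unfolding Ff_def using t by (simp add: less_divide_eq)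
qed

lemma alg_H:
  fixes s c x t e :: real
  assumes c: "c \<noteq> 0" and t: "t \<noteq> 0" and te: "t = s - x * c" and p: "s^2 + c^2 = 1"
    and e: "e = (81/35) * x^0 * s^2 * c^1 + (-57/35) * x^1 * s^1 * c^2 + (1/35) * x^1 * s^3 * c^0 + (-24/35) * x^2 * s^0 * c^3 + (-36/35) * x^2 * s^2 * c^1"
  shows "((x^2 - 1) * t^2 + x^4 * c^2 + (2 * x^3 - 3 * x) * c * t) / t^2 - (x * s^2 / (c * t)) / 35 - 46/35 = - e / (c * t^2)"
  using c t apply (simp add: field_simps e)
  using te p by algebra

lemma Hf_lt: assumes "0 < x" "x < pi/2" shows "Ff x - Uf x / 35 < 46/35"
proof -
  have c: "cos x \<noteq> 0" using sc_pos assms by force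
  have t: "sin x - x * cos x \<noteq> 0" using tt_pos assms by force
  have eq: "Ff x - Uf x / 35 - 46/35 = - eH x / (cos x * (sin x - x * cos x)^2)"
    unfolding Ff_def Uf_def
    by (rule alg_H[OF c t refl sin_cos_squared_add[of x]]) (simp add: eH_def)
  have "0 < eH x / (cos x * (sin x - x * cos x)^2)"
    using eH_pos[of x] assms sc_pos[OF assms] t by (intro divide_pos_pos mult_pos_pos) auto
  then show ?thesis using eq by linarith
qed

lemma eG_id: "eG x = (sin x - x * cos x) * eU x / 35 - cos x^2 * eW x"
  unfolding eG_def eU_def eW_def by (simp add: field_simps) algebra

lemma Uf_mono: assumes "0 < a" "a < b" "b < pi/2" shows "Uf a < Uf b"
proof (rule DERIV_pos_imp_increasing[OF assms(2)])
  fix x assume x: "a \<le> x" "x \<le> b"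
  then have x0: "0 < x" "x < pi/2" using assms by auto
  have "0 < eU x / (cos x^2 * (sin x - x * cos x)^2)"
    using eU_pos[of x] x0 nzs[OF x0] by (intro divide_pos_pos) auto
  then show "\<exists>y. DERIV Uf x :> y \<and> 0 < y" using dUf[OF x0] by blast
qed

lemma Ff_mono: assumes "0 < a" "a < b" "b \<le> pi/2" shows "Ff a < Ff b"
proof (rule DERIV_pos_imp_increasing[OF assms(2)])
  fix x assume x: "a \<le> x" "x \<le> b"
  then have x0: "0 < x" "x \<le> pi/2" using assms by auto
  have "0 < eW x / (sin x - x * cos x)^3"
    using eW_pos[OF x0] tt_pos[OF x0] by (intro divide_pos_pos) auto
  then show "\<exists>y. DERIV Ff x :> y \<and> 0 < y" using dFf[OF x0] by blast
qed

lemma Hf_anti: assumes "0 < a" "a < b" "b < pi/2" shows "Ff b - Uf b / 35 < Ff a - Uf a / 35"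
proof -
  have "(\<lambda>x. - (Ff x - Uf x / 35)) a < (\<lambda>x. - (Ff x - Uf x / 35)) b"
  proof (rule DERIV_pos_imp_increasing[OF assms(2)])
    fix x assume x: "a \<le> x" "x \<le> b"
    then have x0: "0 < x" "x < pi/2" and x1: "x \<le> pi/2" using assms by auto
    have d: "DERIV (\<lambda>x. - (Ff x - Uf x / 35)) x :> - (eW x / (sin x - x * cos x)^3 - eU x / (cos x^2 * (sin x - x * cos x)^2) / 35)"
      by (intro DERIV_minus DERIV_diff DERIV_cdivide dFf[OF x0(1) x1] dUf[OF x0])
    have c: "cos x \<noteq> 0" and t: "sin x - x * cos x \<noteq> 0" using nzs[OF x0] by auto
    have "- (eW x / (sin x - x * cos x)^3 - eU x / (cos x^2 * (sin x - x * cos x)^2) / 35) = eG x / (cos x^2 * (sin x - x * cos x)^3)"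
      unfolding eG_id using c t by (simp add: field_simps) algebra
    moreover have "0 < eG x / (cos x^2 * (sin x - x * cos x)^3)"
      using eG_pos[OF x0(1) x1] tt_pos[OF x0(1) x1] sc_pos[OF x0] by (intro divide_pos_pos mult_pos_pos) auto
    ultimately show "\<exists>y. DERIV (\<lambda>x. - (Ff x - Uf x / 35)) x :> y \<and> 0 < y" using d by auto
  qed
  then show ?thesis by simp
qed

lemma Ff_pi2: "Ff (pi/2) = pi^2/4 - 1"
  unfolding Ff_def by (simp add: power_divide)


theorem lemma6:
  fixes q :: real
  shows "(q \<ge> 1 \<longrightarrow>
            strict_mono_on {0<..<pi/2} (g1 q) \<and>
            (q > 1 \<longrightarrow> (\<forall>x\<in>{0<..<pi/2}. 3*q - 8/5 < g1 q x)) \<and>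
            (q = 1 \<longrightarrow> (\<forall>x\<in>{0<..<pi/2}. 3*q - 8/5 < g1 q x \<and> g1 q x < pi^2/4 - 1)))
       \<and> (q \<le> 34/35 \<longrightarrow>
            strict_antimono_on {0<..<pi/2} (g1 q) \<and>
            (\<forall>x\<in>{0<..<pi/2}. g1 q x < 3*q - 8/5))"
proof (intro conjI impI)
  assume q: "1 \<le> q"
  show "strict_mono_on {0<..<pi/2} (g1 q)"
  proof (rule monotone_onI)
    fix a b assume ab: "a \<in> {0<..<pi/2}" "b \<in> {0<..<pi/2}" "a < b"
    then have a: "0 < a" "a < pi/2" and b: "0 < b" "b < pi/2" by auto
    have "(q - 1) * Uf a \<le> (q - 1) * Uf b"
      using Uf_mono[OF a(1) ab(3) b(2)] q by (intro mult_left_mono) auto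
    moreover have "Ff a < Ff b" using Ff_mono[OF a(1) ab(3)] b by simp
    ultimately show "g1 q a < g1 q b" using g1_eq[OF a] g1_eq[OF b] by simp
  qed
next
  assume q: "1 < q"
  show "\<forall>x\<in>{0<..<pi/2}. 3*q - 8/5 < g1 q x"
  proof
    fix x assume "x \<in> {0<..<pi/2}"
    then have x: "0 < x" "x < pi/2" by auto
    have "(q - 1) * 3 \<le> (q - 1) * Uf x" using Uf_gt3[OF x] q by (intro mult_left_mono) auto
    then show "3*q - 8/5 < g1 q x" using g1_eq[OF x, of q] Ff_gt[OF x] by (simp add: algebra_simps)
  qed
next
  assume q: "q = 1"
  show "\<forall>x\<in>{0<..<pi/2}. 3*q - 8/5 < g1 q x \<and> g1 q x < pi^2/4 - 1"
  proof
    fix x assume "x \<in> {0<..<pi/2}"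
    then have x: "0 < x" "x < pi/2" by auto
    have "Ff x < Ff (pi/2)" using Ff_mono[OF x(1) x(2)] by simp
    then show "3*q - 8/5 < g1 q x \<and> g1 q x < pi^2/4 - 1"
      using g1_eq[OF x, of q] Ff_gt[OF x] Ff_pi2 q by simp
  qed
next
  assume q: "q \<le> 34/35"
  have eq: "g1 q x = (q - 34/35) * Uf x + (Ff x - Uf x / 35)" if "0 < x" "x < pi/2" for x
    using g1_eq[OF that, of q] by (simp add: algebra_simps)
  show "strict_antimono_on {0<..<pi/2} (g1 q)"
  proof (rule monotone_onI)
    fix a b assume ab: "a \<in> {0<..<pi/2}" "b \<in> {0<..<pi/2}" "a < b"
    then have a: "0 < a" "a < pi/2" and b: "0 < b" "b < pi/2" by auto
    have "(q - 34/35) * Uf b \<le> (q - 34/35) * Uf a"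
      using Uf_mono[OF a(1) ab(3) b(2)] q by (intro mult_left_mono_neg) auto
    moreover have "Ff b - Uf b / 35 < Ff a - Uf a / 35" using Hf_anti[OF a(1) ab(3) b(2)] .
    ultimately show "g1 q b < g1 q a" using eq[OF a] eq[OF b] by simp
  qed
  show "\<forall>x\<in>{0<..<pi/2}. g1 q x < 3*q - 8/5"
  proof
    fix x assume "x \<in> {0<..<pi/2}"
    then have x: "0 < x" "x < pi/2" by auto
    have "(q - 34/35) * Uf x \<le> (q - 34/35) * 3" using Uf_gt3[OF x] q by (intro mult_left_mono_neg) auto
    then show "g1 q x < 3*q - 8/5" using eq[OF x] Hf_lt[OF x] by (simp add: algebra_simps)
  qed
qed


end
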